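(* Let $G$ be a graph with $n\ge 2$ vertices and average degree $d$. Then $G$ has a (possibly non-induced) subgraph with all degrees lying in the range $[d',6d']$, where $$d'=\frac{\left\lfloor (d/4-1)/\lceil \log n\rceil\right\rfloor+1}{6}.$$
   Context: Logarithms are base 2. *)

theory Defs
  imports Complex_Main
begin

definition simple_graph :: "'a set \<Rightarrow> 'a set set \<Rightarrow> bool" where
  "simple_graph V E \<longleftrightarrow> finite V \<and> (\<forall>e\<in>E. e \<subseteq> V \<and> card e = 2)"

definition degree :: "'a set set \<Rightarrow> 'a \<Rightarrow> nat" where
  "degree E v = card {e \<in> E. v \<in> e}"

definition avg_degree :: "'a set \<Rightarrow> 'a set set \<Rightarrow> real" where
  "avg_degree V E = 2 * real (card E) / real (card V)"

definition subgraph :: "'a set \<Rightarrow> 'a set set \<Rightarrow> 'a set \<Rightarrow> 'a set set \<Rightarrow> bool" where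
  "subgraph V' E' V E \<longleftrightarrow> V' \<subseteq> V \<and> E' \<subseteq> E \<and> (\<forall>e\<in>E'. e \<subseteq> V')"

end

theory Submission
  imports Defs
begin


lemma core_lemma:
  fixes c :: real
  assumes "finite V" "\<forall>e\<in>E. e \<subseteq> V \<and> e \<noteq> {}" "E \<noteq> {}" "c > 0" "c * card V \<le> card E"
  shows "\<exists>W\<subseteq>V. W \<noteq> {} \<and> (\<forall>v\<in>W. c \<le> card {e\<in>E. e \<subseteq> W \<and> v \<in> e})"
  using assms
proof (induction V arbitrary: E rule: finite_psubset_induct)
  case (psubset V)
  have finE: "finite E"
    by (rule finite_subset[of E "Pow V"]) (use psubset.prems(1) psubset.hyps in auto)
  show ?case
  proof (cases "\<forall>v\<in>V. c \<le> card {e\<in>E. e \<subseteq> V \<and> v \<in> e}")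
    case True
    have "V \<noteq> {}" using psubset.prems by auto
    then show ?thesis using True by blast
  next
    case False
    then obtain v where v0: "v \<in> V" "\<not> c \<le> card {e\<in>E. e \<subseteq> V \<and> v \<in> e}" by blast
    then have v: "v \<in> V" "card {e\<in>E. e \<subseteq> V \<and> v \<in> e} < c" by auto
    define Ev where "Ev = {e\<in>E. v \<in> e}"
    define E1 where "E1 = {e\<in>E. v \<notin> e}"
    have Ev_eq: "{e\<in>E. e \<subseteq> V \<and> v \<in> e} = Ev" using psubset.prems(1) unfolding Ev_def by auto
    have EU: "E = Ev \<union> E1" and EI: "Ev \<inter> E1 = {}" unfolding Ev_def E1_def by auto
    have fEv: "finite Ev" and fE1: "finite E1" using finE unfolding Ev_def E1_def by auto
    have "card (Ev \<union> E1) = card Ev + card E1" by (rule card_Un_disjoint[OF fEv fE1 EI])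
    then have cE: "card E = card Ev + card E1" using EU by simp
    have cV: "card (V - {v}) = card V - 1" using v psubset.hyps by simp
    have cV1: "card V \<ge> 1" using v psubset.hyps card_0_eq by fastforce
    have "c * card (V - {v}) = c * card V - c" using cV cV1 by (simp add: of_nat_diff algebra_simps)
    also have "\<dots> < card E1" using psubset.prems(4) v(2) cE Ev_eq by simp
    finally have lt: "c * card (V - {v}) < card E1" .
    have "E1 \<noteq> {}"
    proof
      assume "E1 = {}"
      then have "c * card (V - {v}) < 0" using lt by simp
      moreover have "c * card (V - {v}) \<ge> 0" using psubset.prems(3) by simp
      ultimately show False by simp
    qed
    moreover have "\<forall>e\<in>E1. e \<subseteq> V - {v} \<and> e \<noteq> {}" using psubset.prems(1) unfolding E1_def by auto
    moreover have "V - {v} \<subset> V" using v by auto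
    moreover have "finite (V - {v})" using psubset.hyps by simp
    ultimately have "\<exists>W\<subseteq>V - {v}. W \<noteq> {} \<and> (\<forall>u\<in>W. c \<le> card {e\<in>E1. e \<subseteq> W \<and> u \<in> e})"
      using psubset.IH[of "V - {v}" E1] psubset.prems psubset.hyps lt by (simp add: less_imp_le)
    then obtain W where W: "W \<subseteq> V - {v}" "W \<noteq> {}" "\<forall>u\<in>W. c \<le> card {e\<in>E1. e \<subseteq> W \<and> u \<in> e}"
      by blast
    have eqW: "\<And>u. {e\<in>E1. e \<subseteq> W \<and> u \<in> e} = {e\<in>E. e \<subseteq> W \<and> u \<in> e}" using W(1) unfolding E1_def by auto
    have "W \<subseteq> V" using W(1) by auto
    then show ?thesis using W(2,3) unfolding eqW by blast
  qed
qed

definition crosses :: "'a set \<Rightarrow> 'a set \<Rightarrow> bool" where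
  "crosses P e \<longleftrightarrow> e \<inter> P \<noteq> {} \<and> e - P \<noteq> {}"

lemma cut_lemma:
  assumes "finite V"
  shows "\<forall>e\<in>E. e \<subseteq> V \<and> card e = 2 \<Longrightarrow> \<exists>P\<subseteq>V. card E \<le> 2 * card {e\<in>E. crosses P e}"
  using assms
proof (induction V arbitrary: E rule: finite_induct)
  case empty
  have "E = {}"
  proof (rule ccontr)
    assume "E \<noteq> {}" then obtain e where "e \<in> E" by blast
    with empty.prems have "e = {}" "card e = 2" by auto
    then show False by simp
  qed
  then show ?case by auto
next
  case (insert v V)
  have finE: "finite E"
    by (rule finite_subset[of E "Pow (insert v V)"]) (use insert.prems insert.hyps in auto)
  define E1 where "E1 = {e\<in>E. v \<notin> e}"
  define E2 where "E2 = {e\<in>E. v \<in> e}"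
  have "\<forall>e\<in>E1. e \<subseteq> V \<and> card e = 2" using insert.prems unfolding E1_def by auto
  then obtain P where P: "P \<subseteq> V" "card E1 \<le> 2 * card {e\<in>E1. crosses P e}" using insert.IH insert.hyps by blast
  have vP: "v \<notin> P" using P insert.hyps by auto
  have same: "{e\<in>E1. crosses (insert v P) e} = {e\<in>E1. crosses P e}"
    unfolding E1_def crosses_def by auto
  have part: "{e\<in>E2. crosses P e} \<union> {e\<in>E2. crosses (insert v P) e} = E2"
     "{e\<in>E2. crosses P e} \<inter> {e\<in>E2. crosses (insert v P) e} = {}"
  proof -
    have "\<And>e. e \<in> E2 \<Longrightarrow> crosses P e \<longleftrightarrow> \<not> crosses (insert v P) e"
    proof -
      fix e assume e: "e \<in> E2"
      then have "card e = 2" "v \<in> e" "e \<subseteq> insert v V" using insert.prems unfolding E2_def by auto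
      then obtain x y where xy: "e = {x, y}" "x \<noteq> y" by (auto simp: card_2_iff)
      then obtain u where u: "e = {v, u}" "u \<noteq> v" using \<open>v \<in> e\<close> by auto
      then have "u \<in> V" using \<open>e \<subseteq> insert v V\<close> by auto
      show "crosses P e \<longleftrightarrow> \<not> crosses (insert v P) e" unfolding crosses_def u using vP u(2) by auto
    qed
    then show "{e\<in>E2. crosses P e} \<union> {e\<in>E2. crosses (insert v P) e} = E2"
     "{e\<in>E2. crosses P e} \<inter> {e\<in>E2. crosses (insert v P) e} = {}" by auto
  qed
  have finE2: "finite E2" using finE unfolding E2_def by auto
  have "card ({e\<in>E2. crosses P e} \<union> {e\<in>E2. crosses (insert v P) e}) = card {e\<in>E2. crosses P e} + card {e\<in>E2. crosses (insert v P) e}"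
    by (rule card_Un_disjoint) (use finE2 part(2) in auto)
  then have c2: "card E2 = card {e\<in>E2. crosses P e} + card {e\<in>E2. crosses (insert v P) e}"
    using part(1) by simp
  have splitE: "\<And>Q. {e\<in>E. crosses Q e} = {e\<in>E1. crosses Q e} \<union> {e\<in>E2. crosses Q e}"
    unfolding E1_def E2_def by auto
  have splitc: "\<And>Q. card {e\<in>E. crosses Q e} = card {e\<in>E1. crosses Q e} + card {e\<in>E2. crosses Q e}"
  proof -
    fix Q
    have "{e\<in>E1. crosses Q e} \<inter> {e\<in>E2. crosses Q e} = {}" unfolding E1_def E2_def by auto
    moreover have "finite {e\<in>E1. crosses Q e}" "finite {e\<in>E2. crosses Q e}" using finE unfolding E1_def E2_def by auto
    ultimately have "card ({e\<in>E1. crosses Q e} \<union> {e\<in>E2. crosses Q e}) = card {e\<in>E1. crosses Q e} + card {e\<in>E2. crosses Q e}"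
      by (intro card_Un_disjoint) auto
    then show "card {e\<in>E. crosses Q e} = card {e\<in>E1. crosses Q e} + card {e\<in>E2. crosses Q e}"
      by (simp only: splitE)
  qed
  have cE: "card E = card E1 + card E2"
  proof -
    have EU: "E = E1 \<union> E2" and EI: "E1 \<inter> E2 = {}" unfolding E1_def E2_def by auto
    have "card (E1 \<union> E2) = card E1 + card E2" by (rule card_Un_disjoint) (use finE EI in \<open>auto simp: E1_def E2_def\<close>)
    then show ?thesis using EU by simp
  qed
  show ?case
  proof (cases "card E2 \<le> 2 * card {e\<in>E2. crosses P e}")
    case True
    then show ?thesis using P cE splitc[of P] by (intro exI[of _ P]) auto
  next
    case False
    then have "card E2 \<le> 2 * card {e\<in>E2. crosses (insert v P) e}" using c2 by linarith
    then show ?thesis using P cE splitc[of "insert v P"] same by (intro exI[of _ "insert v P"]) auto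
  qed
qed



lemma stars_lemma:
  fixes E :: "'a set set" and D :: nat
  assumes D: "D \<ge> 1"
  shows "finite A \<Longrightarrow> finite B \<Longrightarrow> A \<inter> B = {} \<Longrightarrow> B \<noteq> {} \<Longrightarrow> card A \<le> card B \<Longrightarrow> card A < 2^j
    \<Longrightarrow> (\<forall>b\<in>B. j*(D-1)+1 \<le> card {a\<in>A. {a,b}\<in>E})
    \<Longrightarrow> \<exists>H U. H \<subseteq> E \<and> finite U \<and> U \<subseteq> A \<union> B \<and> (\<forall>e\<in>H. e \<subseteq> U) \<and> H \<noteq> {}
         \<and> (\<forall>v. card {e\<in>H. v\<in>e} \<le> D) \<and> D * card U \<le> 6 * card H"
proof (induction j arbitrary: A B)
  case 0
  then obtain b where b: "b \<in> B" by auto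
  with 0 have "1 \<le> card {a\<in>A. {a,b}\<in>E}" by auto
  moreover have "A = {}" using 0 by auto
  ultimately show ?case by simp
next
  case (Suc j)
  note fA = Suc.prems(1) and fB = Suc.prems(2) and disj = Suc.prems(3) and Bne = Suc.prems(4)
    and AB = Suc.prems(5) and A2 = Suc.prems(6) and degB = Suc.prems(7)
  define valid where "valid R \<longleftrightarrow> R \<subseteq> A \<times> B \<and> (\<forall>p\<in>R. {fst p, snd p} \<in> E)
     \<and> (\<forall>b\<in>B. card {p\<in>R. snd p = b} = 0 \<or> card {p\<in>R. snd p = b} = D)
     \<and> (\<forall>a\<in>A. card {p\<in>R. fst p = a} \<le> D)" for R
  have finAB: "finite (A \<times> B)" using fA fB by simp
  have v0: "valid {}" unfolding valid_def by simp
  have bnd: "\<forall>R. valid R \<longrightarrow> card R < card (A \<times> B) + 1"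
  proof (intro allI impI)
    fix R assume "valid R"
    then have "R \<subseteq> A \<times> B" unfolding valid_def by simp
    then have "card R \<le> card (A \<times> B)" using finAB card_mono by blast
    then show "card R < card (A \<times> B) + 1" by simp
  qed
  obtain R where vR: "valid R" and maxR: "\<forall>R'. valid R' \<longrightarrow> card R' \<le> card R"
    using ex_has_greatest_nat[of valid "{}" card "card (A \<times> B) + 1", OF v0 bnd] by blast
  have RAB: "R \<subseteq> A \<times> B" and RE: "\<forall>p\<in>R. {fst p, snd p} \<in> E"
    and RB: "\<forall>b\<in>B. card {p\<in>R. snd p = b} = 0 \<or> card {p\<in>R. snd p = b} = D"
    and RA: "\<forall>a\<in>A. card {p\<in>R. fst p = a} \<le> D" using vR unfolding valid_def by auto
  have finR: "finite R" using RAB finAB finite_subset by blast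
  define B' where "B' = {b\<in>B. card {p\<in>R. snd p = b} = D}"
  define S where "S = {a\<in>A. card {p\<in>R. fst p = a} = D}"
  have B'B: "B' \<subseteq> B" and SA: "S \<subseteq> A" unfolding B'_def S_def by auto
  have cRsumB: "card R = (\<Sum>b\<in>B. card {p\<in>R. snd p = b})"
  proof -
    have "(\<Sum>b\<in>B. sum (\<lambda>_. 1::nat) {p\<in>R. snd p = b}) = sum (\<lambda>_. 1) R"
      by (rule sum.group[OF finR fB]) (use RAB in auto)
    then show ?thesis by simp
  qed
  have cRsumA: "card R = (\<Sum>a\<in>A. card {p\<in>R. fst p = a})"
  proof -
    have "(\<Sum>a\<in>A. sum (\<lambda>_. 1::nat) {p\<in>R. fst p = a}) = sum (\<lambda>_. 1) R"
      by (rule sum.group[OF finR fA]) (use RAB in auto)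
    then show ?thesis by simp
  qed
  have cR: "card R = D * card B'"
  proof -
    have "(\<Sum>b\<in>B. card {p\<in>R. snd p = b}) = (\<Sum>b\<in>B. if card {p\<in>R. snd p = b} = D then D else 0)"
      by (rule sum.cong) (use RB in auto)
    also have "\<dots> = (\<Sum>b\<in>B'. D)" unfolding B'_def by (rule sum.inter_filter[OF fB, symmetric])
    also have "\<dots> = D * card B'" by simp
    finally show ?thesis using cRsumB by simp
  qed
  have cS: "D * card S \<le> card R"
  proof -
    have "D * card S = (\<Sum>a\<in>S. card {p\<in>R. fst p = a})" unfolding S_def by simp
    also have "\<dots> \<le> (\<Sum>a\<in>A. card {p\<in>R. fst p = a})" by (rule sum_mono2[OF fA SA]) auto
    finally show ?thesis using cRsumA by simp
  qed
  have SB': "card S \<le> card B'" using cS cR D by (metis mult_le_cancel1 not_one_le_zero mult_le_cancel_left_pos less_le_trans zero_less_one)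
  obtain b0 where b0: "b0 \<in> B" using Bne by auto
  have "Suc j*(D-1)+1 \<le> card {a\<in>A. {a,b0}\<in>E}" using degB b0 by blast
  also have "\<dots> \<le> card A" by (rule card_mono[OF fA]) auto
  finally have Apos: "card A \<ge> 1" by simp
  show ?case
  proof (cases "card A \<le> 5 * card B'")
    case True
    define f where "f = (\<lambda>p::'a\<times>'a. {fst p, snd p})"
    define H where "H = f ` R"
    define U where "U = A \<union> B'"
    have injf: "inj_on f R"
    proof
      fix p q assume p: "p \<in> R" and q: "q \<in> R" and eq: "f p = f q"
      have "fst p \<in> A" "snd p \<in> B" "fst q \<in> A" "snd q \<in> B" using p q RAB by auto
      then show "p = q" using eq disj unfolding f_def by (auto simp: doubleton_eq_iff prod_eq_iff)
    qed
    have cH: "card H = card R" unfolding H_def using card_image[OF injf] .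
    have HE: "H \<subseteq> E" unfolding H_def f_def using RE by auto
    have HU: "\<forall>e\<in>H. e \<subseteq> U"
    proof
      fix e assume "e \<in> H"
      then obtain p where p: "p \<in> R" "e = {fst p, snd p}" unfolding H_def f_def by auto
      have "p \<in> {q\<in>R. snd q = snd p}" using p by simp
      then have ne: "{q\<in>R. snd q = snd p} \<noteq> {}" by blast
      have "finite {q\<in>R. snd q = snd p}" using finR by simp
      then have "card {q\<in>R. snd q = snd p} \<noteq> 0" using ne by simp
      moreover have "snd p \<in> B" "fst p \<in> A" using p RAB by auto
      ultimately have "snd p \<in> B'" using RB unfolding B'_def by auto
      then show "e \<subseteq> U" using p \<open>fst p \<in> A\<close> unfolding U_def by auto
    qed
    have Bne': "B' \<noteq> {}" using True Apos by auto
    have finB': "finite B'" using B'B fB finite_subset by blast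
    have "card R \<ge> 1" using cR Bne' finB' D by (simp add: Suc_le_eq card_gt_0_iff)
    then have Hne: "H \<noteq> {}" unfolding H_def by auto
    have degH: "\<forall>v. card {e\<in>H. v\<in>e} \<le> D"
    proof
      fix v
      have sub: "{e\<in>H. v\<in>e} \<subseteq> f ` {p\<in>R. fst p = v \<or> snd p = v}" unfolding H_def f_def by auto
      have "card {e\<in>H. v\<in>e} \<le> card (f ` {p\<in>R. fst p = v \<or> snd p = v})"
        by (rule card_mono) (use finR sub in auto)
      also have "\<dots> \<le> card {p\<in>R. fst p = v \<or> snd p = v}" by (rule card_image_le) (use finR in auto)
      also have "\<dots> \<le> D"
      proof (cases "v \<in> A")
        case True
        then have "{p\<in>R. fst p = v \<or> snd p = v} = {p\<in>R. fst p = v}" using RAB disj by auto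
        then show ?thesis using RA True by simp
      next
        case False
        show ?thesis
        proof (cases "v \<in> B")
          case True
          then have "{p\<in>R. fst p = v \<or> snd p = v} = {p\<in>R. snd p = v}" using RAB disj by auto
          moreover have "card {p\<in>R. snd p = v} = 0 \<or> card {p\<in>R. snd p = v} = D" using RB True by blast
          ultimately show ?thesis by auto
        next
          case False
          then have "{p\<in>R. fst p = v \<or> snd p = v} = {}" using RAB \<open>v \<notin> A\<close> by auto
          then show ?thesis by (metis card.empty le0)
        qed
      qed
      finally show "card {e\<in>H. v\<in>e} \<le> D" .
    qed
    have "card U \<le> card A + card B'" unfolding U_def by (rule card_Un_le)
    also have "\<dots> \<le> 6 * card B'" using True by simp
    finally have "D * card U \<le> D * (6 * card B')" by simp
    also have "\<dots> = 6 * card H" using cH cR by simp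
    finally have ratio: "D * card U \<le> 6 * card H" .
    have "finite U" "U \<subseteq> A \<union> B" unfolding U_def using fA finB' B'B by auto
    then show ?thesis using HE HU Hne degH ratio by blast
  next
    case False
    define B2 where "B2 = B - B'"
    have finS: "finite S" using SA fA finite_subset by blast
    have finB2: "finite B2" using fB unfolding B2_def by simp
    have cB2: "card B2 = card B - card B'" unfolding B2_def using B'B fB by (simp add: card_Diff_subset finite_subset)
    have "card B' \<le> card B" using B'B fB card_mono by blast
    have S_B2: "card S \<le> card B2" using cB2 SB' False AB by linarith
    have "card B2 > 0" using cB2 False AB by linarith
    then have B2ne: "B2 \<noteq> {}" by auto
    have S2: "card S < 2^j" using SB' False A2 by simp
    have disj2: "S \<inter> B2 = {}" using SA disj unfolding B2_def by auto
    have maxb: "card {a\<in>A - S. {a,b}\<in>E} < D" if b: "b \<in> B2" for b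
    proof (rule ccontr)
      assume "\<not> card {a\<in>A - S. {a,b}\<in>E} < D"
      then obtain T where T: "T \<subseteq> {a\<in>A - S. {a,b}\<in>E}" "card T = D" "finite T"
        by (meson not_less obtain_subset_with_card_n)
      have bB: "b \<in> B" "b \<notin> B'" using b unfolding B2_def by auto
      then have "card {p\<in>R. snd p = b} = 0" using RB unfolding B'_def by auto
      then have Rb: "{p\<in>R. snd p = b} = {}" using finR by simp
      define R' where "R' = R \<union> (\<lambda>a. (a,b)) ` T"
      have injT: "inj_on (\<lambda>a. (a,b)) T" by (rule inj_onI) simp
      have disjR: "R \<inter> (\<lambda>a. (a,b)) ` T = {}" using Rb by auto
      have cR': "card R' = card R + D" unfolding R'_def
        using card_Un_disjoint[OF finR finite_imageI[OF T(3)] disjR] card_image[OF injT] T(2) by simp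
      have "valid R'"
        unfolding valid_def
      proof (intro conjI ballI)
        show "R' \<subseteq> A \<times> B" unfolding R'_def using RAB T(1) bB by auto
      next
        fix p assume "p \<in> R'"
        then show "{fst p, snd p} \<in> E" unfolding R'_def using RE T(1) by auto
      next
        fix b'' assume b'': "b'' \<in> B"
        show "card {p\<in>R'. snd p = b''} = 0 \<or> card {p\<in>R'. snd p = b''} = D"
        proof (cases "b'' = b")
          case True
          have "{p\<in>R'. snd p = b''} = (\<lambda>a. (a,b)) ` T" unfolding R'_def using Rb True by force
          then show ?thesis using card_image[OF injT] T(2) by simp
        next
          case False
          have "{p\<in>R'. snd p = b''} = {p\<in>R. snd p = b''}" unfolding R'_def using False by auto
          then show ?thesis using RB b'' by simp
        qed
      next
        fix a assume a: "a \<in> A"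
        show "card {p\<in>R'. fst p = a} \<le> D"
        proof (cases "a \<in> T")
          case True
          have "(a,b) \<notin> R" using Rb by auto
          moreover have "{p\<in>R'. fst p = a} = insert (a,b) {p\<in>R. fst p = a}" unfolding R'_def using True by auto
          moreover have "finite {p\<in>R. fst p = a}" using finR by simp
          ultimately have "card {p\<in>R'. fst p = a} = Suc (card {p\<in>R. fst p = a})" by simp
          moreover have "a \<notin> S" using True T(1) by auto
          then have "card {p\<in>R. fst p = a} < D" using RA a unfolding S_def by (simp add: order_le_neq_trans)
          ultimately show ?thesis by simp
        next
          case False
          have "{p\<in>R'. fst p = a} = {p\<in>R. fst p = a}" unfolding R'_def using False by auto
          then show ?thesis using RA a by simp
        qed
      qed
      then have "card R' \<le> card R" using maxR by blast
      then show False using cR' D by simp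
    qed
    have deg2: "\<forall>b\<in>B2. j*(D-1)+1 \<le> card {a\<in>S. {a,b}\<in>E}"
    proof
      fix b assume b: "b \<in> B2"
      have "{a\<in>A. {a,b}\<in>E} = {a\<in>S. {a,b}\<in>E} \<union> {a\<in>A - S. {a,b}\<in>E}" using SA by auto
      then have "card {a\<in>A. {a,b}\<in>E} \<le> card {a\<in>S. {a,b}\<in>E} + card {a\<in>A - S. {a,b}\<in>E}"
        using card_Un_le[of "{a\<in>S. {a,b}\<in>E}" "{a\<in>A - S. {a,b}\<in>E}"] by simp
      moreover have "Suc j*(D-1)+1 \<le> card {a\<in>A. {a,b}\<in>E}" using degB b unfolding B2_def by blast
      moreover have "card {a\<in>A - S. {a,b}\<in>E} \<le> D - 1" using maxb[OF b] by simp
      ultimately show "j*(D-1)+1 \<le> card {a\<in>S. {a,b}\<in>E}" by simp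
    qed
    obtain H U where HU: "H \<subseteq> E" "finite U" "U \<subseteq> S \<union> B2" "\<forall>e\<in>H. e \<subseteq> U" "H \<noteq> {}"
         "\<forall>v. card {e\<in>H. v\<in>e} \<le> D" "D * card U \<le> 6 * card H"
      using Suc.IH[OF finS finB2 disj2 B2ne S_B2 S2 deg2] by blast
    have "U \<subseteq> A \<union> B" using HU(3) SA unfolding B2_def by auto
    then show ?thesis using HU by blast
  qed
qed



lemma nbr_count:
  assumes "finite X" "\<forall>e\<in>F. card e = 2 \<and> y \<in> e \<and> (\<exists>x\<in>X. x \<in> e)" "F \<subseteq> E" "y \<notin> X"
  shows "card F \<le> card {x\<in>X. {x,y}\<in>E}"
proof -
  have "F \<subseteq> (\<lambda>x. {x,y}) ` {x\<in>X. {x,y}\<in>E}"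
  proof
    fix e assume e: "e \<in> F"
    then obtain x where x: "x \<in> X" "x \<in> e" "y \<in> e" "card e = 2" using assms(2) by blast
    have "x \<noteq> y" using x assms(4) by auto
    then have "e = {x,y}" using x by (metis card_2_iff doubleton_eq_iff insertE singletonD)
    then show "e \<in> (\<lambda>x. {x,y}) ` {x\<in>X. {x,y}\<in>E}" using x e assms(3) by auto
  qed
  then have "card F \<le> card ((\<lambda>x. {x,y}) ` {x\<in>X. {x,y}\<in>E})" by (rule card_mono[rotated]) (use assms(1) in auto)
  also have "\<dots> \<le> card {x\<in>X. {x,y}\<in>E}" by (rule card_image_le) (use assms(1) in auto)
  finally show ?thesis .
qed



theorem lemma2p1:
  fixes V :: "'a set" and E :: "'a set set" and n :: nat and d d' :: real
  assumes "simple_graph V E"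
    and "n = card V" and "n \<ge> 2"
    and "d = avg_degree V E"
    and "d' = (real_of_int \<lfloor>(d / 4 - 1) / real_of_int \<lceil>log 2 (real n)\<rceil>\<rfloor> + 1) / 6"
  shows "\<exists>V' E'. V' \<noteq> {} \<and> subgraph V' E' V E \<and>
           (\<forall>v\<in>V'. d' \<le> real (degree E' v) \<and> real (degree E' v) \<le> 6 * d')"
proof -
  have finV: "finite V" and Eok: "\<forall>e\<in>E. e \<subseteq> V \<and> card e = 2"
    using assms(1) unfolding simple_graph_def by auto
  have finE: "finite E" by (rule finite_subset[of E "Pow V"]) (use Eok finV in auto)
  define k where "k = \<lceil>log 2 (real n)\<rceil>"
  have "log 2 (real n) \<ge> 1" using assms(3) by simp
  then have k1: "k \<ge> 1" unfolding k_def by linarith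
  define m where "m = \<lfloor>(d / 4 - 1) / real_of_int k\<rfloor> + 1"
  have d'm: "d' = real_of_int m / 6" unfolding m_def k_def assms(5) by simp
  have Vpos: "card V \<ge> 2" using assms(2,3) by simp
  have d0: "d \<ge> 0" unfolding assms(4) avg_degree_def by simp
  have "(d / 4 - 1) / real_of_int k \<ge> -1"
  proof -
    have "real_of_int k \<ge> 1" using k1 by simp
    then have "(d / 4 - 1) \<ge> -1 * real_of_int k" using d0 by linarith
    then show ?thesis using \<open>real_of_int k \<ge> 1\<close> by (simp add: le_divide_eq)
  qed
  then have m0: "m \<ge> 0" unfolding m_def by linarith
  show ?thesis
  proof (cases "m = 0")
    case True
    obtain v where v: "v \<in> V" using Vpos by fastforce
    show ?thesis
      by (rule exI[of _ "{v}"], rule exI[of _ "{}"]) (use v True d'm in \<open>auto simp: subgraph_def degree_def\<close>)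
  next
    case False
    define D where "D = nat m"
    have D1: "D \<ge> 1" and Dm: "real D = real_of_int m" using False m0 unfolding D_def by auto
    define kn where "kn = nat k"
    have knk: "real kn = real_of_int k" using k1 unfolding kn_def by simp
    have kn1: "kn \<ge> 1" using k1 unfolding kn_def by simp
    have "real_of_int m - 1 \<le> (d / 4 - 1) / real_of_int k" unfolding m_def by linarith
    then have "(real_of_int m - 1) * real_of_int k \<le> d / 4 - 1" using k1 by (simp add: le_divide_eq)
    then have key: "real (kn * (D - 1) + 1) \<le> d / 4" using knk Dm D1 by (simp add: of_nat_diff algebra_simps)
    have nle: "real n \<le> 2 ^ kn"
    proof -
      have "real n = 2 powr (log 2 (real n))" using assms(3) by simp
      also have "\<dots> \<le> 2 powr (real kn)" using knk unfolding k_def by (intro powr_mono) auto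
      also have "\<dots> = 2 ^ kn" by (simp add: powr_realpow)
      finally show ?thesis .
    qed
    then have nle': "n \<le> 2 ^ kn" by (metis of_nat_le_iff of_nat_numeral of_nat_power)
    have "(1::real) \<le> real (kn * (D - 1) + 1)" by simp
    then have "d \<ge> 4" using key by linarith
    then have Epos: "card E > 0" unfolding assms(4) avg_degree_def using Vpos
      by (cases "card E = 0") auto
    obtain P where P: "P \<subseteq> V" "card E \<le> 2 * card {e\<in>E. crosses P e}"
      using cut_lemma[OF finV Eok] by blast
    define Ec where "Ec = {e\<in>E. crosses P e}"
    have "d / 4 * card V = card E / 2" unfolding assms(4) avg_degree_def using Vpos by simp
    also have "\<dots> \<le> card Ec" using P(2) unfolding Ec_def by simp
    finally have cEc: "d / 4 * card V \<le> card Ec" .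
    have "card Ec > 0" using P(2) Epos unfolding Ec_def by linarith
    then have Ecne: "Ec \<noteq> {}" by (metis card.empty less_irrefl)
    have Ecok: "\<forall>e\<in>Ec. e \<subseteq> V \<and> e \<noteq> {}" using Eok unfolding Ec_def by fastforce
    obtain W where W: "W \<subseteq> V" "W \<noteq> {}" "\<forall>v\<in>W. d / 4 \<le> card {e\<in>Ec. e \<subseteq> W \<and> v \<in> e}"
      using core_lemma[OF finV Ecok Ecne _ cEc] \<open>d \<ge> 4\<close> by auto
    have finW: "finite W" using W(1) finV finite_subset by blast
    define A0 where "A0 = W \<inter> P"
    define B0 where "B0 = W - P"
    have degB0: "\<forall>b\<in>B0. d / 4 \<le> card {x\<in>A0. {x,b}\<in>E}"
    proof
      fix b assume b: "b \<in> B0"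
      have "card {e\<in>Ec. e \<subseteq> W \<and> b \<in> e} \<le> card {x\<in>A0. {x,b}\<in>E}"
      proof (rule nbr_count)
        show "finite A0" using finW unfolding A0_def by simp
        show "{e\<in>Ec. e \<subseteq> W \<and> b \<in> e} \<subseteq> E" unfolding Ec_def by auto
        show "b \<notin> A0" using b unfolding A0_def B0_def by auto
        show "\<forall>e\<in>{e\<in>Ec. e \<subseteq> W \<and> b \<in> e}. card e = 2 \<and> b \<in> e \<and> (\<exists>x\<in>A0. x \<in> e)"
          using Eok unfolding Ec_def crosses_def A0_def by blast
      qed
      then show "d / 4 \<le> card {x\<in>A0. {x,b}\<in>E}" using W(3) b unfolding B0_def by force
    qed
    have degA0: "\<forall>a\<in>A0. d / 4 \<le> card {x\<in>B0. {x,a}\<in>E}"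
    proof
      fix a assume a: "a \<in> A0"
      have "card {e\<in>Ec. e \<subseteq> W \<and> a \<in> e} \<le> card {x\<in>B0. {x,a}\<in>E}"
      proof (rule nbr_count)
        show "finite B0" using finW unfolding B0_def by simp
        show "{e\<in>Ec. e \<subseteq> W \<and> a \<in> e} \<subseteq> E" unfolding Ec_def by auto
        show "a \<notin> B0" using a unfolding A0_def B0_def by auto
        show "\<forall>e\<in>{e\<in>Ec. e \<subseteq> W \<and> a \<in> e}. card e = 2 \<and> a \<in> e \<and> (\<exists>x\<in>B0. x \<in> e)"
          using Eok unfolding Ec_def crosses_def B0_def by blast
      qed
      then show "d / 4 \<le> card {x\<in>B0. {x,a}\<in>E}" using W(3) a unfolding A0_def by force
    qed
    obtain A B where AB: "finite A" "finite B" "A \<inter> B = {}" "A \<union> B = W" "card A \<le> card B"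
      "\<forall>b\<in>B. d / 4 \<le> card {x\<in>A. {x,b}\<in>E}"
    proof (cases "card A0 \<le> card B0")
      case True
      show ?thesis by (rule that[of A0 B0]) (use True degB0 finW in \<open>auto simp: A0_def B0_def\<close>)
    next
      case False
      show ?thesis by (rule that[of B0 A0]) (use False degA0 finW in \<open>auto simp: A0_def B0_def\<close>)
    qed
    have Bne: "B \<noteq> {}" using AB W(2) by auto
    have "card W = card A + card B" using card_Un_disjoint[OF AB(1,2,3)] AB(4) by simp
    moreover have "card W \<le> n" using W(1) finV assms(2) card_mono by blast
    ultimately have "2 * card A \<le> 2 ^ kn" using AB(5) nle' by linarith
    then have A2: "card A < 2 ^ kn" using zero_less_power[of "2::nat" kn] by linarith
    have degB: "\<forall>b\<in>B. kn * (D - 1) + 1 \<le> card {a\<in>A. {a,b}\<in>E}"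
    proof
      fix b assume "b \<in> B"
      then have "real (kn * (D - 1) + 1) \<le> real (card {a\<in>A. {a,b}\<in>E})" using AB(6) key by force
      then show "kn * (D - 1) + 1 \<le> card {a\<in>A. {a,b}\<in>E}" by linarith
    qed
    obtain H U where HU: "H \<subseteq> E" "finite U" "U \<subseteq> A \<union> B" "\<forall>e\<in>H. e \<subseteq> U" "H \<noteq> {}"
         "\<forall>v. card {e\<in>H. v\<in>e} \<le> D" "D * card U \<le> 6 * card H"
      using stars_lemma[OF D1 AB(1,2,3) Bne AB(5) A2 degB] by blast
    have Hok: "\<forall>e\<in>H. e \<subseteq> U \<and> e \<noteq> {}" using HU(1,4) Eok by fastforce
    have "real D / 6 * card U \<le> card H" using HU(7) by (simp add: of_nat_mult[symmetric] del: of_nat_mult)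
    then obtain W' where W': "W' \<subseteq> U" "W' \<noteq> {}" "\<forall>v\<in>W'. real D / 6 \<le> card {e\<in>H. e \<subseteq> W' \<and> v \<in> e}"
      using core_lemma[OF HU(2) Hok HU(5), of "real D / 6"] D1 by auto
    have finH: "finite H" using HU(1) finE finite_subset by blast
    show ?thesis
    proof (intro exI conjI)
      show "W' \<noteq> {}" by (rule W'(2))
      show "subgraph W' {e\<in>H. e \<subseteq> W'} V E" unfolding subgraph_def
        using W'(1) HU(1,3) AB(4) W(1) by auto
      show "\<forall>v\<in>W'. d' \<le> real (degree {e\<in>H. e \<subseteq> W'} v) \<and> real (degree {e\<in>H. e \<subseteq> W'} v) \<le> 6 * d'"
      proof
        fix v assume v: "v \<in> W'"
        have eq: "degree {e\<in>H. e \<subseteq> W'} v = card {e\<in>H. e \<subseteq> W' \<and> v \<in> e}"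
          unfolding degree_def by (rule arg_cong[of _ _ card]) auto
        have "card {e\<in>H. e \<subseteq> W' \<and> v \<in> e} \<le> card {e\<in>H. v\<in>e}" by (rule card_mono) (use finH in auto)
        also have "\<dots> \<le> D" using HU(6) by blast
        finally have up: "card {e\<in>H. e \<subseteq> W' \<and> v \<in> e} \<le> D" .
        have "d' = real D / 6" using d'm Dm by simp
        moreover have lo: "real D / 6 \<le> card {e\<in>H. e \<subseteq> W' \<and> v \<in> e}" using W'(3) v by blast
        moreover have "real (card {e\<in>H. e \<subseteq> W' \<and> v \<in> e}) \<le> real D" using up by linarith
        ultimately show "d' \<le> real (degree {e\<in>H. e \<subseteq> W'} v) \<and> real (degree {e\<in>H. e \<subseteq> W'} v) \<le> 6 * d'"
          unfolding eq by linarith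
      qed
    qed
  qed
qed

end
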